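(* Under the setting of the context, let $f^*=\min\{\|F_2\|_1 : S\in\mathbb{R}^{k\times n},\,F_2\in\mathbb{R}^{m\times n},\,A_2=QS+F_2\}$. Then there is a constant $C\ge0$ such that $f^*-\|F_2^{(k)}\|_1\le \frac{C}{\mu_k}$ for all $k=1,2,\dots$.
   Context: For a matrix $X$, $\|X\|_1=\sum_{i,j}|X_{ij}|$, $\|X\|_\infty=\max_{i,j}|X_{ij}|$, $\|X\|_F$ the Frobenius norm, $\langle Y,X\rangle=\mathrm{Trace}(Y^\top X)$. The shrinkage operator $\mathcal{S}_\tau$ acts entrywise by $\mathcal{S}_\tau(x)=\mathrm{sign}(x)\max\{|x|-\tau,0\}$. Augmented Lagrangian: $L(S,F_2,Y,\mu)=\|F_2\|_1+\langle Y,A_2-QS-F_2\rangle+\frac{\mu}{2}\|A_2-QS-F_2\|_F^2$, with $A_2\in\mathbb{R}^{m\times n}$, $A_2\ne0$, $Q\in\mathbb{R}^{m\times k}$, $Q^\top Q=I_k$, $\mu_0>0$, $\rho>1$, and $S^{(0)},F_2^{(0)}$ arbitrary. ALM iteration: $Y^{(0)}=A_2/\|A_2\|_\infty$, and for $k\ge0$: $S^{(k+1)}=Q^\top(A_2-F_2^{(k)}+\frac{1}{\mu_k}Y^{(k)})$, $F_2^{(k+1)}=\mathcal{S}_{1/\mu_k}(A_2-QS^{(k+1)}+\frac{1}{\mu_k}Y^{(k)})$, $Y^{(k+1)}=Y^{(k)}+\mu_k(A_2-QS^{(k+1)}-F_2^{(k+1)})$, $\mu_{k+1}=\rho\mu_k$.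 *)

theory Defs
  imports "HOL-Analysis.Analysis"
begin

text \<open>Matrices are rendered as real^'c^'r (rows indexed by 'r, columns by 'c).\<close>

definition ent_l1 :: "real^'c^'r \<Rightarrow> real" where
  "ent_l1 X = (\<Sum>i\<in>UNIV. \<Sum>j\<in>UNIV. \<bar>X $ i $ j\<bar>)"

definition ent_max :: "real^'c^'r \<Rightarrow> real" where
  "ent_max X = Max {\<bar>X $ i $ j\<bar> | i j. True}"

definition shrink :: "real \<Rightarrow> real \<Rightarrow> real" where
  "shrink \<tau> x = sgn x * max (\<bar>x\<bar> - \<tau>) 0"

definition shrinkM :: "real \<Rightarrow> real^'c^'r \<Rightarrow> real^'c^'r" where
  "shrinkM \<tau> X = (\<chi> i j. shrink \<tau> (X $ i $ j))"

definition fstar :: "real^'n^'m \<Rightarrow> real^'p^'m \<Rightarrow> real" where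
  "fstar A2 Q = Inf {ent_l1 F | (S :: real^'n^'p) F. A2 = Q ** S + F}"

end

theory Submission
  imports Defs
begin

lemma ent_l1_nonneg: "ent_l1 X \<ge> 0"
  unfolding ent_l1_def by (intro sum_nonneg) auto

lemma ent_l1_add: "ent_l1 (X + Y) \<le> ent_l1 X + ent_l1 Y"
  unfolding ent_l1_def sum.distrib[symmetric]
  by (intro sum_mono) (auto intro: abs_triangle_ineq)

lemma ent_l1_minus: "ent_l1 (X - Y) \<le> ent_l1 X + ent_l1 Y"
  unfolding ent_l1_def sum.distrib[symmetric]
  by (intro sum_mono) (auto intro: abs_triangle_ineq4)

lemma ent_l1_scale: "ent_l1 (c *\<^sub>R X) = \<bar>c\<bar> * ent_l1 X"
  unfolding ent_l1_def by (simp add: sum_distrib_left abs_mult)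

lemma ent_l1_bound:
  assumes "\<And>i j. \<bar>(X::real^'c^'r) $ i $ j\<bar> \<le> 1"
  shows "ent_l1 X \<le> real (CARD('r) * CARD('c))"
proof -
  have "ent_l1 X \<le> (\<Sum>i\<in>(UNIV::'r set). \<Sum>j\<in>(UNIV::'c set). 1)"
    unfolding ent_l1_def by (intro sum_mono) (use assms in auto)
  thus ?thesis by simp
qed

lemma clip: assumes "m > 0" shows "\<bar>m * (x - shrink (1/m) x)\<bar> \<le> 1"
proof -
  have "\<bar>x - shrink (1/m) x\<bar> \<le> 1/m"
    unfolding shrink_def using assms by (cases "x > 0"; cases "x < 0"; auto simp: sgn_if max_def)
  hence "m * \<bar>x - shrink (1/m) x\<bar> \<le> m * (1/m)" using assms by (intro mult_left_mono) auto
  thus ?thesis using assms by (simp add: abs_mult)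
qed

theorem mainTheorem4:
  fixes A2 :: "real^'n^'m" and Q :: "real^'p^'m" and mu0 rho :: real
    and S :: "nat \<Rightarrow> real^'n^'p" and F2 :: "nat \<Rightarrow> real^'n^'m"
    and Y :: "nat \<Rightarrow> real^'n^'m" and mu :: "nat \<Rightarrow> real"
  assumes "A2 \<noteq> 0"
    and "transpose Q ** Q = mat 1"
    and "mu0 > 0" and "rho > 1"
    and "Y 0 = (1 / ent_max A2) *\<^sub>R A2"
    and "mu 0 = mu0"
    and "\<And>k. S (Suc k) = transpose Q ** (A2 - F2 k + (1 / mu k) *\<^sub>R Y k)"
    and "\<And>k. F2 (Suc k) = shrinkM (1 / mu k) (A2 - Q ** S (Suc k) + (1 / mu k) *\<^sub>R Y k)"
    and "\<And>k. Y (Suc k) = Y k + mu k *\<^sub>R (A2 - Q ** S (Suc k) - F2 (Suc k))"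
    and "\<And>k. mu (Suc k) = rho * mu k"
  shows "\<exists>C\<ge>0. \<forall>k\<ge>1. fstar A2 Q - ent_l1 (F2 k) \<le> C / mu k"
proof -
  have mupos: "mu k > 0" for k
    by (induction k) (use assms(3,4,6,10) in auto)
  define M where "M = max (real (CARD('m) * CARD('n))) (ent_l1 (Y 0))"
  have Ysuc: "\<bar>Y (Suc k) $ i $ j\<bar> \<le> 1" for k i j
  proof -
    define x where "x = (A2 - Q ** S (Suc k) + (1 / mu k) *\<^sub>R Y k) $ i $ j"
    have "Y (Suc k) $ i $ j = Y k $ i $ j + mu k * ((A2 - Q ** S (Suc k)) $ i $ j
        - shrink (1/mu k) x)"
      using assms(8,9)[of k] unfolding x_def shrinkM_def by simp
    also have "\<dots> = mu k * (x - shrink (1/mu k) x)"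
      unfolding x_def using mupos[of k] by (simp add: field_simps)
    finally show ?thesis using clip[OF mupos[of k]] by simp
  qed
  have YM: "ent_l1 (Y k) \<le> M" for k
  proof (cases k)
    case 0 thus ?thesis unfolding M_def by simp
  next
    case (Suc k')
    have "ent_l1 (Y k) \<le> real (CARD('m) * CARD('n))"
      by (rule ent_l1_bound) (use Ysuc[of k'] Suc in simp)
    thus ?thesis unfolding M_def by simp
  qed
  have M0: "M \<ge> 0" unfolding M_def using ent_l1_nonneg[of "Y 0"] by (simp add: max_def)
  show ?thesis
  proof (intro exI[of _ "2 * M * rho"] conjI allI impI)
    show "0 \<le> 2 * M * rho" using M0 assms(4) by simp
    fix k :: nat assume "k \<ge> 1"
    then obtain k' where k: "k = Suc k'" by (cases k) auto
    let ?F = "A2 - Q ** S k"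
    have mem: "ent_l1 ?F \<in> {ent_l1 F | (S :: real^'n^'p) F. A2 = Q ** S + F}"
      by force
    have "fstar A2 Q \<le> ent_l1 ?F"
      unfolding fstar_def
      by (rule cInf_lower[OF mem]) (auto intro!: bdd_belowI[of _ 0] ent_l1_nonneg)
    have D: "?F - F2 k = (1 / mu k') *\<^sub>R (Y k - Y k')"
    proof -
      have "Y k - Y k' = mu k' *\<^sub>R (?F - F2 k)"
        using assms(9)[of k'] unfolding k by simp
      hence "(1 / mu k') *\<^sub>R (Y k - Y k') = ((1 / mu k') * mu k') *\<^sub>R (?F - F2 k)"
        by simp
      thus ?thesis using mupos[of k'] by simp
    qed
    have "ent_l1 ?F \<le> ent_l1 (F2 k) + ent_l1 (?F - F2 k)"
      using ent_l1_add[of "F2 k" "?F - F2 k"] by simp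
    also have "ent_l1 (?F - F2 k) = (1 / mu k') * ent_l1 (Y k - Y k')"
      unfolding D ent_l1_scale using mupos[of k'] by simp
    also have "\<dots> \<le> (1 / mu k') * (2 * M)"
      using ent_l1_minus[of "Y k" "Y k'"] YM[of k] YM[of k'] mupos[of k']
      by (intro mult_left_mono) auto
    also have "(1 / mu k') * (2 * M) = 2 * M * rho / mu k"
      using assms(10)[of k'] mupos[of k'] assms(4) unfolding k by (simp add: field_simps)
    finally show "fstar A2 Q - ent_l1 (F2 k) \<le> 2 * M * rho / mu k"
      using \<open>fstar A2 Q \<le> ent_l1 ?F\<close> by simp
  qed
qed

end
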